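(* Let $p$ and $q$ be non-constant polynomials with complex coefficients, and let $g:\mathbb{C}\to\mathbb{C}$ be a non-constant entire function with no zeros. Then the function $f(z)=p(g(z))+q(1/g(z))$ is surjective from $\mathbb{C}$ onto $\mathbb{C}$. *)

theory Defs
  imports "HOL-Complex_Analysis.Complex_Analysis" "HOL-Computational_Algebra.Polynomial"
begin

end

theory Submission
  imports Defs "HOL-Computational_Algebra.Fundamental_Theorem_Algebra"
begin

theorem mainTheorem5:
  fixes p q :: "complex poly" and g :: "complex \<Rightarrow> complex"
  assumes "degree p \<ge> 1" and "degree q \<ge> 1"
    and "g holomorphic_on UNIV"
    and "\<And>z. g z \<noteq> 0"
    and "\<not> (\<exists>c. \<forall>z. g z = c)"
  shows "surj (\<lambda>z. poly p (g z) + poly q (1 / g z))"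
proof (rule surjI[where f = "\<lambda>w. SOME z. poly p (g z) + poly q (1 / g z) = w"], rule someI_ex)
  fix w :: complex
  define m where "m = degree q"
  define r where "r = monom 1 m * (p - [:w:]) + reflect_poly q"
  have dpw: "degree (p - [:w:]) = degree p"
    using assms(1) degree_add_eq_left[of "[:-w:]" p] by (simp add: diff_conv_add_uminus)
  have pw0: "p - [:w:] \<noteq> 0" using dpw assms(1) by auto
  have d1: "degree (monom 1 m * (p - [:w:])) = m + degree p"
    using pw0 dpw by (simp add: degree_mult_eq degree_monom_eq)
  have d2: "degree (reflect_poly q) < m + degree p"
    using degree_reflect_poly_le[of q] assms(1) m_def by linarith
  have dr: "degree r = m + degree p"
    unfolding r_def using d1 d2 by (simp add: degree_add_eq_left)
  have q0: "q \<noteq> 0" using assms(2) by auto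
  have r0: "poly r 0 \<noteq> 0"
    using assms(2) q0 unfolding r_def m_def by (simp add: poly_monom power_0_left)
  have "\<not> constant (poly r)"
    using dr assms(1) by (subst constant_degree) simp
  then obtain u where u: "poly r u = 0"
    using fundamental_theorem_of_algebra by blast
  have u0: "u \<noteq> 0" using u r0 by auto
  have "poly r u = u ^ m * (poly p u + poly q (1/u) - w)"
    unfolding r_def m_def using u0
    by (simp add: poly_monom poly_reflect_poly_nz algebra_simps inverse_eq_divide)
  hence eq: "poly p u + poly q (1/u) = w" using u u0 by simp
  have "u \<in> range g"
  proof (rule ccontr)
    assume "u \<notin> range g"
    hence "range g \<inter> {0, u} = {}" using assms(4) by auto
    then obtain c where "g = (\<lambda>x. c)"
      using little_Picard[OF assms(3)] u0 by metis
    thus False using assms(5) by auto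
  qed
  then obtain z where "g z = u" by auto
  thus "\<exists>z. poly p (g z) + poly q (1 / g z) = w" using eq by auto
qed

end
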